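(* Let $(\sigma_k)_{k>0}$ be real numbers with $\sigma_k/\ln(k)\to\infty$ as $k\to\infty$, and let $\gamma>0$. Then $$\lim_{k\to\infty}k\int_{\sigma_k}^\infty\exp\Bigl(-2m\Bigl(\gamma-\sqrt{\tfrac{\ln(k)}{m}}\Bigr)^2\Bigr)\,\mathrm dm=0.$$ *)

theory Defs
  imports "HOL-Analysis.Analysis"
begin

end

theory Submission
  imports Defs
begin

lemma pointwise_bound:
  fixes L m \<gamma> :: real
  assumes "\<gamma> > 0" "L \<ge> 0" "m > 0" "4 * L / \<gamma>\<^sup>2 \<le> m"
  shows "exp (- 2 * m * (\<gamma> - sqrt (L / m))\<^sup>2) \<le> exp (- (\<gamma>\<^sup>2/2) * m)"
proof -
  have "L / m \<le> \<gamma>\<^sup>2 / 4"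
    using assms by (simp add: field_simps)
  hence "sqrt (L / m) \<le> sqrt ((\<gamma>/2)\<^sup>2)"
    by (simp add: power_divide)
  hence s: "sqrt (L / m) \<le> \<gamma>/2" using assms(1) by simp
  have "\<gamma>/2 \<le> \<gamma> - sqrt (L / m)" using s by simp
  hence "(\<gamma>/2)\<^sup>2 \<le> (\<gamma> - sqrt (L / m))\<^sup>2"
    using assms(1) by (intro power_mono) auto
  hence "m * (\<gamma>/2)\<^sup>2 \<le> m * (\<gamma> - sqrt (L / m))\<^sup>2"
    using assms(3) by (intro mult_left_mono) auto
  hence "- 2 * m * (\<gamma> - sqrt (L / m))\<^sup>2 \<le> - (\<gamma>\<^sup>2/2) * m"
    by (simp add: power_divide field_simps)
  thus ?thesis by simp
qed

theorem lemmaC4: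
  fixes \<sigma> :: "nat \<Rightarrow> real" and \<gamma> :: real
  assumes "filterlim (\<lambda>k. \<sigma> k / ln (real k)) at_top sequentially"
    and "\<gamma> > 0"
  shows "(\<lambda>k. real k * integral {\<sigma> k..}
            (\<lambda>m. exp (- 2 * m * (\<gamma> - sqrt (ln (real k) / m))\<^sup>2)))
         \<longlonglongrightarrow> 0"
proof -
  define c where "c = \<gamma>\<^sup>2/2"
  have c: "c > 0" using assms(2) by (simp add: c_def)
  have ev1: "eventually (\<lambda>k. \<sigma> k / ln (real k) \<ge> 4 / \<gamma>\<^sup>2 + 1) sequentially"
    using assms(1) by (simp add: filterlim_at_top)
  have ev2: "eventually (\<lambda>k::nat. k \<ge> 2) sequentially"
    by (simp add: eventually_ge_at_top)
  have E: "eventually (\<lambda>k. 0 \<le> real k * integral {\<sigma> k..}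
            (\<lambda>m. exp (- 2 * m * (\<gamma> - sqrt (ln (real k) / m))\<^sup>2))
        \<and> real k * integral {\<sigma> k..}
            (\<lambda>m. exp (- 2 * m * (\<gamma> - sqrt (ln (real k) / m))\<^sup>2)) \<le> 1 / (c * real k)) sequentially"
    using ev1 ev2
  proof eventually_elim
    case (elim k)
    define L where "L = ln (real k)"
    define f where "f = (\<lambda>m. exp (- 2 * m * (\<gamma> - sqrt (L / m))\<^sup>2))"
    define g where "g = (\<lambda>m::real. exp (- c * m))"
    have kpos: "real k \<ge> 2" using elim by simp
    have Lpos: "L > 0" unfolding L_def using kpos by simp
    have "\<sigma> k \<ge> (4 / \<gamma>\<^sup>2 + 1) * L"
      using elim(1) Lpos unfolding L_def by (simp add: field_simps)
    hence sg: "\<sigma> k \<ge> 4 * L / \<gamma>\<^sup>2 + L" by (simp add: algebra_simps)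
    have g4: "4 * L / \<gamma>\<^sup>2 \<ge> 0" using Lpos by simp
    have spos: "\<sigma> k > 0" using sg g4 Lpos by linarith
    have fg: "f m \<le> g m" if "m \<in> {\<sigma> k..}" for m
    proof -
      have sm: "\<sigma> k \<le> m" using that by simp
      have "m > 0" "4 * L / \<gamma>\<^sup>2 \<le> m" using sm sg g4 Lpos by linarith+
      from pointwise_bound[OF assms(2) _ this] Lpos show ?thesis
        unfolding f_def g_def c_def by simp
    qed
    have gi: "(g has_integral exp (- c * \<sigma> k) / c) {\<sigma> k..}"
      unfolding g_def using has_integral_exp_minus_to_infinity[OF c] by simp
    have I: "0 \<le> integral {\<sigma> k..} f \<and> integral {\<sigma> k..} f \<le> exp (- c * \<sigma> k) / c"
    proof (cases "f integrable_on {\<sigma> k..}")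
      case True
      have "integral {\<sigma> k..} f \<le> integral {\<sigma> k..} g"
        using True gi fg by (intro integral_le) auto
      moreover have "0 \<le> integral {\<sigma> k..} f"
        using True by (intro integral_nonneg) (auto simp: f_def)
      ultimately show ?thesis using gi integral_unique by metis
    next
      case False
      thus ?thesis using c by (simp add: not_integrable_integral)
    qed
    have "c * \<sigma> k \<ge> 2 * L" using sg g4 Lpos c
    proof -
      have "c * \<sigma> k \<ge> c * (4 * L / \<gamma>\<^sup>2)" using sg g4 Lpos c by (intro mult_left_mono) auto
      also have "c * (4 * L / \<gamma>\<^sup>2) = 2 * L" using assms(2) by (simp add: c_def field_simps)
      finally show ?thesis .
    qed
    hence "exp (- c * \<sigma> k) \<le> exp (- 2 * L)" by simp
    also have "exp (- 2 * L) = 1 / (real k)\<^sup>2"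
    proof -
      have eL: "exp L = real k" using kpos unfolding L_def by simp
      have "exp (2*L) = (exp L)^2" using exp_of_nat_mult[of 2 L] by simp
      moreover have "exp (- 2 * L) * exp (2*L) = 1" by (simp flip: exp_add)
      ultimately show ?thesis using eL kpos by (simp add: eq_divide_eq mult.commute)
    qed
    finally have e: "exp (- c * \<sigma> k) \<le> 1 / (real k)\<^sup>2" .
    have "real k * integral {\<sigma> k..} f \<le> real k * (exp (- c * \<sigma> k) / c)"
      using I kpos by (intro mult_left_mono) auto
    also have "\<dots> \<le> real k * (1 / (real k)\<^sup>2 / c)"
      using e c kpos by (intro mult_left_mono divide_right_mono) auto
    also have "\<dots> = 1 / (c * real k)" using kpos by (simp add: power2_eq_square field_simps)
    finally show ?case using I kpos unfolding f_def L_def by auto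
  qed
  have lim: "(\<lambda>k. 1 / (c * real k)) \<longlonglongrightarrow> 0"
    by (intro tendsto_divide_0[OF tendsto_const] filterlim_at_top_imp_at_infinity
        filterlim_tendsto_pos_mult_at_top[OF tendsto_const c] filterlim_real_sequentially)
  show ?thesis
    by (rule tendsto_sandwich[OF eventually_mono[OF E] eventually_mono[OF E] tendsto_const lim])
       (erule conjunct1, erule conjunct2)
qed

end
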